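(* Let $G=(V,E)$ be a connected graph, let $T$ be a spanning tree of $G$ rooted in $s$ which is an $\mathcal L$-tree of some DFS on $G$, let $\rho$ be an arbitrary vertex order of $V$ ending with $s$, and let $\sigma$ be the order output by Ordering$(G,T,s,\rho)$. Let $v,w$ be vertices with $v\prec_\sigma w$ which have the same parent in $T$ and the same neighborhood in the set $Y=\{x\in V: x\prec_\sigma v\}$. Then $v$ is to the right of $w$ in $\rho$.
   Context: Graphs are finite, simple, undirected; $N(v)$ is the neighborhood of $v$. A vertex order is a linear order $\sigma=(v_1,\dots,v_n)$ of $V$; $\sigma(i)=v_i$; $u\prec_\sigma v$ means $u$ appears before (to the left of) $v$; $\rho^-$ is the reverse of $\rho$. DFS: a search that starts at a vertex and repeatedly visits an unvisited neighbor of the most recently visited vertex that still has an unvisited neighbor. DFS$^+(\tau)$ on a graph $H$: the DFS of $H$ starting at the last vertex of $\tau$ that, whenever several vertices may be visited next, visits the one rightmost in $\tau$. $\mathcal L$-tree of a vertex order $(v_1,\dots,v_n)$: the spanning tree rooted at $v_1$ with an edge from each $v_i$ ($i>1$) to its rightmost neighbor $v_j$ with $j<i$; $T$ rooted at $s$ is an $\mathcal L$-tree of DFS on $G$ if some DFS order of $G$ starting at $s$ has $\mathcal L$-tree $T$. Refining an ordered partition $(Q_1,\dots,Q_k)$ of $V$ with $S'$ replaces each $Q_i$ by $(Q_i\cap S',Q_i\setminus S')$ whenever both are nonempty. Procedure Ordering$(G,T,s,\rho)$: let $\beta$ be the reverse of a BFS order of $T$ starting at $s$; $\mathcal Q=(V)$;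 for $i=1,\dots,n$, with $v=\beta(i)$, refine $\mathcal Q$ with $\{w\in N(v): w\prec_\beta v\}$; order the vertices inside each class of $\mathcal Q$ according to $\rho^-$ and move $\{s\}$ to the leftmost position; let $\tau$ be the reverse of the resulting order of all vertices; output $\sigma=$ DFS$^+(\tau)$ on $T$. *)

theory Defs
  imports Main
begin

definition simple_graph :: "'a set \<Rightarrow> ('a \<Rightarrow> 'a \<Rightarrow> bool) \<Rightarrow> bool" where
  "simple_graph V E \<longleftrightarrow> finite V \<and> (\<forall>x y. E x y \<longrightarrow> x \<in> V \<and> y \<in> V)
     \<and> (\<forall>x y. E x y \<longrightarrow> E y x) \<and> (\<forall>x. \<not> E x x)"

definition connected_graph :: "'a set \<Rightarrow> ('a \<Rightarrow> 'a \<Rightarrow> bool) \<Rightarrow> bool" where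
  "connected_graph V E \<longleftrightarrow> (\<forall>x\<in>V. \<forall>y\<in>V. E\<^sup>*\<^sup>* x y)"

definition vertex_order :: "'a set \<Rightarrow> 'a list \<Rightarrow> bool" where
  "vertex_order V xs \<longleftrightarrow> distinct xs \<and> set xs = V"

definition prec :: "'a list \<Rightarrow> 'a \<Rightarrow> 'a \<Rightarrow> bool" where
  "prec xs u v \<longleftrightarrow> (\<exists>i j. i < j \<and> j < length xs \<and> xs ! i = u \<and> xs ! j = v)"

definition pos :: "'a list \<Rightarrow> 'a \<Rightarrow> nat" where
  "pos xs v = (LEAST i. i < length xs \<and> xs ! i = v)"

text \<open>DFS order of (V,E) starting at s: each new vertex is an unvisited neighbour of
  sigma!j, where j is the most recently visited vertex that still has an unvisited
  neighbour (all vertices visited after sigma!j have no unvisited neighbour).\<close>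
definition is_dfs_order :: "'a set \<Rightarrow> ('a \<Rightarrow> 'a \<Rightarrow> bool) \<Rightarrow> 'a \<Rightarrow> 'a list \<Rightarrow> bool" where
  "is_dfs_order V E s \<sigma> \<longleftrightarrow> vertex_order V \<sigma> \<and> \<sigma> ! 0 = s \<and>
     (\<forall>i. 0 < i \<and> i < length \<sigma> \<longrightarrow>
        (\<exists>j<i. E (\<sigma> ! j) (\<sigma> ! i) \<and>
           (\<forall>k. j < k \<and> k < i \<longrightarrow> (\<forall>u\<in>V. E (\<sigma> ! k) u \<longrightarrow> u \<in> set (take i \<sigma>)))))"

text \<open>BFS order of (V,E) starting at s: each new vertex is an unvisited neighbour of
  the earliest visited vertex that still has an unvisited neighbour.\<close>
definition is_bfs_order :: "'a set \<Rightarrow> ('a \<Rightarrow> 'a \<Rightarrow> bool) \<Rightarrow> 'a \<Rightarrow> 'a list \<Rightarrow> bool" where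
  "is_bfs_order V E s \<sigma> \<longleftrightarrow> vertex_order V \<sigma> \<and> \<sigma> ! 0 = s \<and>
     (\<forall>i. 0 < i \<and> i < length \<sigma> \<longrightarrow>
        (\<exists>j<i. E (\<sigma> ! j) (\<sigma> ! i) \<and>
           (\<forall>k. k < j \<longrightarrow> (\<forall>u\<in>V. E (\<sigma> ! k) u \<longrightarrow> u \<in> set (take i \<sigma>)))))"

text \<open>sigma = DFS+(tau) on (V,H): the DFS of (V,H) starting at the last vertex of tau
  which, among the admissible next vertices, always takes the rightmost one in tau.
  (This relation determines sigma uniquely.)\<close>
definition dfs_plus :: "'a set \<Rightarrow> ('a \<Rightarrow> 'a \<Rightarrow> bool) \<Rightarrow> 'a list \<Rightarrow> 'a list \<Rightarrow> bool" where
  "dfs_plus V H \<tau> \<sigma> \<longleftrightarrow> vertex_order V \<sigma> \<and> \<sigma> ! 0 = last \<tau> \<and>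
     (\<forall>i. 0 < i \<and> i < length \<sigma> \<longrightarrow>
        (\<exists>j<i. H (\<sigma> ! j) (\<sigma> ! i) \<and>
           (\<forall>k. j < k \<and> k < i \<longrightarrow> (\<forall>u\<in>V. H (\<sigma> ! k) u \<longrightarrow> u \<in> set (take i \<sigma>))) \<and>
           (\<forall>u\<in>V. H (\<sigma> ! j) u \<and> u \<notin> set (take i \<sigma>) \<longrightarrow> u = \<sigma> ! i \<or> prec \<tau> u (\<sigma> ! i))))"

text \<open>In the L-tree of pi, the parent of a non-first vertex v is its rightmost
  neighbour to the left of v in pi.\<close>
definition lparent :: "('a \<Rightarrow> 'a \<Rightarrow> bool) \<Rightarrow> 'a list \<Rightarrow> 'a \<Rightarrow> 'a" where
  "lparent E \<pi> v = \<pi> ! (GREATEST j. j < pos \<pi> v \<and> E (\<pi> ! j) v)"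

definition tree_edge :: "'a set \<Rightarrow> 'a \<Rightarrow> ('a \<Rightarrow> 'a) \<Rightarrow> 'a \<Rightarrow> 'a \<Rightarrow> bool" where
  "tree_edge V s p x y \<longleftrightarrow> (x \<in> V - {s} \<and> y = p x) \<or> (y \<in> V - {s} \<and> x = p y)"

definition is_dfs_ltree :: "'a set \<Rightarrow> ('a \<Rightarrow> 'a \<Rightarrow> bool) \<Rightarrow> 'a \<Rightarrow> ('a \<Rightarrow> 'a) \<Rightarrow> bool" where
  "is_dfs_ltree V E s p \<longleftrightarrow>
     (\<exists>\<pi>. is_dfs_order V E s \<pi> \<and> (\<forall>v\<in>V - {s}. p v = lparent E \<pi> v))"

definition refine :: "'a set list \<Rightarrow> 'a set \<Rightarrow> 'a set list" where
  "refine Q S = concat (map (\<lambda>C. if C \<inter> S \<noteq> {} \<and> C - S \<noteq> {} then [C \<inter> S, C - S] else [C]) Q)"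

definition ordering_partition :: "'a set \<Rightarrow> ('a \<Rightarrow> 'a \<Rightarrow> bool) \<Rightarrow> 'a list \<Rightarrow> 'a set list" where
  "ordering_partition V E \<beta> = fold (\<lambda>v Q. refine Q {w. E v w \<and> prec \<beta> w v}) \<beta> [V]"

text \<open>tau: classes in order, vertices inside each class ordered by the reverse of rho,
  s moved to the leftmost position; then the whole order reversed.\<close>
definition ordering_tau :: "'a set \<Rightarrow> ('a \<Rightarrow> 'a \<Rightarrow> bool) \<Rightarrow> 'a \<Rightarrow> 'a list \<Rightarrow> 'a list \<Rightarrow> 'a list" where
  "ordering_tau V E s \<rho> \<beta> = rev (s # filter (\<lambda>x. x \<noteq> s)
      (concat (map (\<lambda>C. filter (\<lambda>x. x \<in> C) (rev \<rho>)) (ordering_partition V E \<beta>))))"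

text \<open>sigma is an output of Ordering(G,T,s,rho), for some choice of BFS order of T.\<close>
definition ordering_output :: "'a set \<Rightarrow> ('a \<Rightarrow> 'a \<Rightarrow> bool) \<Rightarrow> ('a \<Rightarrow> 'a) \<Rightarrow> 'a \<Rightarrow> 'a list \<Rightarrow> 'a list \<Rightarrow> bool" where
  "ordering_output V E p s \<rho> \<sigma> \<longleftrightarrow>
     (\<exists>\<alpha>. is_bfs_order V (tree_edge V s p) s \<alpha> \<and>
        dfs_plus V (tree_edge V s p) (ordering_tau V E s \<rho> (rev \<alpha>)) \<sigma>)"

end

theory Submission
  imports Defs
begin

lemma prec_decomp: "prec xs a b \<longleftrightarrow> (\<exists>ys zs. xs = ys @ a # zs \<and> b \<in> set zs)"
proof
  assume "prec xs a b"
  then obtain i j where ij: "i < j" "j < length xs" "xs!i = a" "xs!j = b" unfolding prec_def by blast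
  have "xs = take i xs @ xs!i # drop (Suc i) xs" using ij by (metis id_take_nth_drop less_trans)
  moreover have "b \<in> set (drop (Suc i) xs)"
  proof -
    have "drop (Suc i) xs ! (j - Suc i) = xs ! j" using ij by simp
    moreover have "j - Suc i < length (drop (Suc i) xs)" using ij by simp
    ultimately show ?thesis using ij by (metis nth_mem)
  qed
  ultimately show "\<exists>ys zs. xs = ys @ a # zs \<and> b \<in> set zs" using ij by metis
next
  assume "\<exists>ys zs. xs = ys @ a # zs \<and> b \<in> set zs"
  then obtain ys zs where h: "xs = ys @ a # zs" "b \<in> set zs" by blast
  then obtain k where k: "k < length zs" "zs!k = b" by (meson in_set_conv_nth)
  show "prec xs a b" unfolding prec_def
    apply (rule exI[of _ "length ys"], rule exI[of _ "length ys + Suc k"])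
    using h k by (simp add: nth_append)
qed

lemma prec_append_left: "prec xs a b \<Longrightarrow> prec (xs@ys) a b"
  unfolding prec_decomp by fastforce
lemma prec_append_right: "prec ys a b \<Longrightarrow> prec (xs@ys) a b"
  unfolding prec_decomp by (metis append.assoc)
lemma prec_append_mid: "a \<in> set xs \<Longrightarrow> b \<in> set ys \<Longrightarrow> prec (xs@ys) a b"
  unfolding prec_decomp by (metis append.assoc append_Cons in_set_conv_decomp set_append UnI2)
lemma prec_cons: "prec xs a b \<Longrightarrow> prec (x#xs) a b"
  using prec_append_right[of xs a b "[x]"] by simp
lemma prec_filter: "prec xs a b \<Longrightarrow> P a \<Longrightarrow> P b \<Longrightarrow> prec (filter P xs) a b"
  unfolding prec_decomp
proof (elim exE conjE)
  fix ys zs assume "xs = ys @ a # zs" "b \<in> set zs" "P a" "P b"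
  then show "\<exists>ys zs. filter P xs = ys @ a # zs \<and> b \<in> set zs"
    by (intro exI[of _ "filter P ys"] exI[of _ "filter P zs"]) auto
qed
lemma prec_rev1: "prec (rev xs) a b \<Longrightarrow> prec xs b a"
proof -
  assume "prec (rev xs) a b"
  then obtain ys zs where h: "rev xs = ys @ a # zs" "b \<in> set zs" unfolding prec_decomp by blast
  then have "xs = rev zs @ a # rev ys" by (metis rev_append rev_rev_ident rev.simps(2) append.assoc append_Cons append_Nil)
  moreover obtain p q where "rev zs = p @ b # q" using h by (metis in_set_conv_decomp set_rev)
  ultimately show ?thesis unfolding prec_decomp by (intro exI[of _ p] exI[of _ "q @ a # rev ys"]) auto
qed
lemma prec_rev: "prec (rev xs) a b \<longleftrightarrow> prec xs b a"
  using prec_rev1 by (metis rev_rev_ident)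
lemma prec_asym: "distinct xs \<Longrightarrow> prec xs a b \<Longrightarrow> \<not> prec xs b a"
  unfolding prec_def by (metis nth_eq_iff_index_eq order.strict_trans not_less_iff_gr_or_eq)
lemma prec_irrefl: "distinct xs \<Longrightarrow> \<not> prec xs a a"
  unfolding prec_def by (metis nth_eq_iff_index_eq order.strict_trans less_irrefl)
lemma prec_trans: "distinct xs \<Longrightarrow> prec xs a b \<Longrightarrow> prec xs b c \<Longrightarrow> prec xs a c"
  unfolding prec_def by (metis nth_eq_iff_index_eq order.strict_trans)
lemma prec_total: "a \<in> set xs \<Longrightarrow> b \<in> set xs \<Longrightarrow> a \<noteq> b \<Longrightarrow> prec xs a b \<or> prec xs b a"
  unfolding prec_def in_set_conv_nth by (metis linorder_neqE_nat)


fun dl :: "'a set list \<Rightarrow> bool" where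
  "dl [] = True"
| "dl (C#Q) = (C \<inter> \<Union>(set Q) = {} \<and> dl Q)"

fun leQ :: "'a set list \<Rightarrow> 'a \<Rightarrow> 'a \<Rightarrow> bool" where
  "leQ [] w v = False"
| "leQ (C#Q) w v = (if w \<in> C then v \<in> C \<union> \<Union>(set Q) else v \<notin> C \<and> leQ Q w v)"

lemma refine_Nil[simp]: "refine [] S = []" by (simp add: refine_def)
lemma refine_Cons[simp]: "refine (C#Q) S = (if C \<inter> S \<noteq> {} \<and> C - S \<noteq> {} then [C \<inter> S, C - S] else [C]) @ refine Q S"
  by (simp add: refine_def)

lemma refine_Union[simp]: "\<Union>(set (refine Q S)) = \<Union>(set Q)"
  by (induction Q) auto

lemma dl_refine: "dl Q \<Longrightarrow> dl (refine Q S)"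
  by (induction Q) auto

lemma leQ_refine: "leQ Q w v \<Longrightarrow> (v \<in> S \<longrightarrow> w \<in> S) \<Longrightarrow> leQ (refine Q S) w v"
  by (induction Q) auto

lemma fold_inv: "\<forall>x. (v \<in> S x \<longrightarrow> w \<in> S x) \<Longrightarrow> dl Q \<Longrightarrow> leQ Q w v \<Longrightarrow>
   dl (fold (\<lambda>x Q. refine Q (S x)) xs Q) \<and> leQ (fold (\<lambda>x Q. refine Q (S x)) xs Q) w v"
  by (induction xs arbitrary: Q) (auto intro: dl_refine leQ_refine)

lemma concat_prec: "leQ Q w v \<Longrightarrow> prec r w v \<Longrightarrow>
   prec (concat (map (\<lambda>C. filter (\<lambda>x. x \<in> C) r) Q)) w v"
proof (induction Q)
  case Nil then show ?case by simp
next
  case (Cons C Q)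
  have wr: "w \<in> set r" and vr: "v \<in> set r" using Cons.prems(2) unfolding prec_def by auto
  show ?case
  proof (cases "w \<in> C")
    case True
    then have "v \<in> C \<or> v \<in> \<Union>(set Q)" using Cons.prems(1) by simp
    then show ?thesis
    proof
      assume "v \<in> C"
      then show ?thesis using True Cons.prems(2) by (simp add: prec_append_left prec_filter)
    next
      assume "v \<in> \<Union>(set Q)"
      then have "v \<in> set (concat (map (\<lambda>C. filter (\<lambda>x. x \<in> C) r) Q))" using vr by auto
      moreover have "w \<in> set (filter (\<lambda>x. x \<in> C) r)" using True wr by simp
      ultimately show ?thesis by (simp add: prec_append_mid)
    qed
  next
    case False
    then show ?thesis using Cons by (simp add: prec_append_right)
  qed
qed

lemma concat_distinct: "dl Q \<Longrightarrow> distinct r \<Longrightarrow> distinct (concat (map (\<lambda>C. filter (\<lambda>x. x \<in> C) r) Q))"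
  by (induction Q) auto


definition anc :: "'a set \<Rightarrow> 'a \<Rightarrow> ('a \<Rightarrow> 'a) \<Rightarrow> 'a \<Rightarrow> 'a \<Rightarrow> bool" where
  "anc V s p = (\<lambda>a b. b \<in> V - {s} \<and> a = p b)\<^sup>*\<^sup>*"

lemma pos_nth: "distinct xs \<Longrightarrow> i < length xs \<Longrightarrow> pos xs (xs!i) = i"
  unfolding pos_def
  by (rule Least_equality) (auto simp: nth_eq_iff_index_eq)

lemma lparent_eq:
  assumes "is_dfs_order V E s \<pi>" "i < length \<pi>" "j < i" "E (\<pi>!j) (\<pi>!i)"
    "\<forall>k. j<k \<and> k<i \<longrightarrow> (\<forall>u\<in>V. E (\<pi>!k) u \<longrightarrow> u \<in> set (take i \<pi>))"
  shows "lparent E \<pi> (\<pi>!i) = \<pi>!j"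
proof -
  have d: "distinct \<pi>" "set \<pi> = V" using assms(1) unfolding is_dfs_order_def vertex_order_def by auto
  have ps: "pos \<pi> (\<pi>!i) = i" using d assms(2) by (simp add: pos_nth)
  have "(GREATEST j'. j' < i \<and> E (\<pi>!j') (\<pi>!i)) = j"
  proof (rule Greatest_equality)
    show "j < i \<and> E (\<pi>!j) (\<pi>!i)" using assms by simp
  next
    fix y assume y: "y < i \<and> E (\<pi>!y) (\<pi>!i)"
    show "y \<le> j"
    proof (rule ccontr)
      assume "\<not> y \<le> j"
      moreover have "\<pi>!i \<in> V" using d assms(2) by auto
      ultimately have "\<pi>!i \<in> set (take i \<pi>)" using assms(5)[rule_format, of y "\<pi>!i"] y by auto
      then obtain k where "k < i" "\<pi>!k = \<pi>!i" by (auto simp: in_set_conv_nth)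
      then show False using d assms(2) by (simp add: nth_eq_iff_index_eq)
    qed
  qed
  then show ?thesis unfolding lparent_def ps by simp
qed

lemma dfs_L:
  assumes dfs: "is_dfs_order V E s \<pi>" and pv: "\<forall>v\<in>V-{s}. p v = lparent E \<pi> v"
  shows "b < length \<pi> \<Longrightarrow> a < b \<Longrightarrow> b \<le> c \<Longrightarrow> c < length \<pi> \<Longrightarrow> E (\<pi>!a) (\<pi>!c) \<Longrightarrow> anc V s p (\<pi>!a) (\<pi>!b)"
proof (induction b rule: less_induct)
  case (less b)
  have d: "distinct \<pi>" "set \<pi> = V" "\<pi>!0 = s" using dfs unfolding is_dfs_order_def vertex_order_def by auto
  from less.prems have b0: "0 < b" by simp
  have dp: "\<forall>i. 0 < i \<and> i < length \<pi> \<longrightarrow>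
        (\<exists>j<i. E (\<pi> ! j) (\<pi> ! i) \<and>
           (\<forall>k. j < k \<and> k < i \<longrightarrow> (\<forall>u\<in>V. E (\<pi> ! k) u \<longrightarrow> u \<in> set (take i \<pi>))))"
    using dfs unfolding is_dfs_order_def by (elim conjE)
  obtain j where j: "j < b" "E (\<pi>!j) (\<pi>!b)"
     "\<forall>k. j<k \<and> k<b \<longrightarrow> (\<forall>u\<in>V. E (\<pi>!k) u \<longrightarrow> u \<in> set (take b \<pi>))"
    using dp[rule_format, of b] b0 less.prems(1) by blast
  have bV: "\<pi>!b \<in> V - {s}"
  proof -
    have "\<pi>!b \<in> V" using d less.prems(1) by auto
    moreover have "\<pi>!b \<noteq> \<pi>!0" proof
      assume "\<pi>!b = \<pi>!0"
      moreover have "0 < length \<pi>" using less.prems(1) by linarith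
      ultimately have "b = 0" using d(1) less.prems(1) nth_eq_iff_index_eq[of \<pi> b 0] by simp
      then show False using b0 by simp
    qed
    ultimately show ?thesis using d by simp
  qed
  have par: "p (\<pi>!b) = \<pi>!j" using pv bV lparent_eq[OF dfs less.prems(1) j] by simp
  have R: "anc V s p (\<pi>!j) (\<pi>!b)" unfolding anc_def
    by (rule r_into_rtranclp) (use bV par in simp)
  consider "j < a" | "j = a" | "a < j" by linarith
  then show ?case
  proof cases
    case 1
    have "\<pi>!c \<in> V" using d less.prems by auto
    then have "\<pi>!c \<in> set (take b \<pi>)" using j(3) 1 less.prems by blast
    then obtain k where "k < b" "\<pi>!k = \<pi>!c" by (auto simp: in_set_conv_nth)
    moreover have "k < length \<pi>" using \<open>k < b\<close> less.prems(1) by linarith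
    ultimately have "k = c" using nth_eq_iff_index_eq[OF d(1), of k c] less.prems(4) by simp
    then show ?thesis using \<open>k < b\<close> less.prems(3) by simp
  next
    case 2 then show ?thesis using R by simp
  next
    case 3
    have "anc V s p (\<pi>!a) (\<pi>!j)" using less.IH[of j] 3 j less.prems by simp
    then show ?thesis using R unfolding anc_def by (rule rtranclp_trans)
  qed
qed

lemma dfs_edge_anc:
  assumes sg: "simple_graph V E" and dfs: "is_dfs_order V E s \<pi>" and pv: "\<forall>v\<in>V-{s}. p v = lparent E \<pi> v"
    and e: "E x y"
  shows "anc V s p x y \<or> anc V s p y x"
proof -
  have d: "distinct \<pi>" "set \<pi> = V" using dfs unfolding is_dfs_order_def vertex_order_def by auto
  have xy: "x \<in> V" "y \<in> V" "x \<noteq> y" "E y x" using sg e unfolding simple_graph_def by blast+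
  obtain a where a: "a < length \<pi>" "\<pi>!a = x" using xy d in_set_conv_nth[of x \<pi>] by auto
  obtain c where c: "c < length \<pi>" "\<pi>!c = y" using xy d in_set_conv_nth[of y \<pi>] by auto
  note ac = a(1) c(1) a(2) c(2)
  have "a \<noteq> c" using ac xy by auto
  then consider "a < c" | "c < a" by linarith
  then show ?thesis
  proof cases
    case 1
    have "anc V s p (\<pi>!a) (\<pi>!c)" by (rule dfs_L[OF dfs pv]) (use ac e 1 in auto)
    then show ?thesis using ac by simp
  next
    case 2
    have "anc V s p (\<pi>!c) (\<pi>!a)" by (rule dfs_L[OF dfs pv]) (use ac xy 2 in auto)
    then show ?thesis using ac by simp
  qed
qed

lemma search_parent:
  assumes vo: "vertex_order V ord" and o0: "ord!0 = s"
    and srch: "\<forall>i. 0<i \<and> i<length ord \<longrightarrow> (\<exists>j<i. tree_edge V s p (ord!j) (ord!i))"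
  shows "i < length ord \<Longrightarrow> ord!i \<noteq> s \<Longrightarrow> prec ord (p (ord!i)) (ord!i)"
proof (induction i rule: less_induct)
  case (less i)
  have d: "distinct ord" using vo unfolding vertex_order_def by auto
  have "0 < i" using less.prems o0 by (metis neq0_conv)
  then obtain j where j: "j < i" "tree_edge V s p (ord!j) (ord!i)" using srch less.prems by blast
  then consider "ord!j \<in> V - {s} \<and> ord!i = p (ord!j)" | "ord!i \<in> V - {s} \<and> ord!j = p (ord!i)"
    unfolding tree_edge_def by blast
  then show ?case
  proof cases
    case 1
    then have "prec ord (ord!i) (ord!j)" using less.IH[of j] j less.prems by auto
    then obtain i' j' where "i' < j'" "j' < length ord" "ord!i' = ord!i" "ord!j' = ord!j"
      unfolding prec_def by blast
    moreover have "j < length ord" using j less.prems by linarith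
    ultimately have "i' = i" "j' = j" using nth_eq_iff_index_eq[OF d, of i' i] nth_eq_iff_index_eq[OF d, of j' j] less.prems(1) by auto
    then show ?thesis using \<open>i' < j'\<close> j by simp
  next
    case 2
    then show ?thesis unfolding prec_def using j less.prems by (intro exI[of _ j] exI[of _ i]) simp
  qed
qed

lemma search_anc:
  assumes vo: "vertex_order V ord" and o0: "ord!0 = s"
    and srch: "\<forall>i. 0<i \<and> i<length ord \<longrightarrow> (\<exists>j<i. tree_edge V s p (ord!j) (ord!i))"
    and a: "anc V s p x y"
  shows "x = y \<or> prec ord x y"
  using a unfolding anc_def
proof (induction rule: rtranclp_induct)
  case base then show ?case by simp
next
  case (step y z)
  have d: "distinct ord" "set ord = V" using vo unfolding vertex_order_def by auto
  have "z \<in> set ord" using step(2) d by simp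
  then obtain i where i: "i < length ord" "ord!i = z" by (auto simp: in_set_conv_nth)
  have "prec ord y z" using search_parent[OF vo o0 srch i(1)] step(2) i by auto
  then show ?case using step(3) prec_trans[OF d(1), of x y z] by auto
qed


theorem lemma10:
  fixes V :: "'a set" and E :: "'a \<Rightarrow> 'a \<Rightarrow> bool" and s :: 'a and p :: "'a \<Rightarrow> 'a"
    and \<rho> \<sigma> :: "'a list" and v w :: 'a
  assumes "simple_graph V E" and "connected_graph V E" and "s \<in> V"
    and "is_dfs_ltree V E s p"
    and "vertex_order V \<rho>" and "last \<rho> = s"
    and "ordering_output V E p s \<rho> \<sigma>"
    and "v \<in> V - {s}" and "w \<in> V - {s}" and "prec \<sigma> v w"
    and "p v = p w"
    and "\<forall>x. prec \<sigma> x v \<longrightarrow> (E v x \<longleftrightarrow> E w x)"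
  shows "prec \<rho> w v"
proof -
  note sg = assms(1)
  have Esym: "\<And>x y. E x y \<Longrightarrow> E y x" and Eirr: "\<And>x. \<not> E x x"
    using sg unfolding simple_graph_def by blast+
  obtain \<pi> where dfs: "is_dfs_order V E s \<pi>" and pv: "\<forall>v\<in>V-{s}. p v = lparent E \<pi> v"
    using assms(4) unfolding is_dfs_ltree_def by blast
  define H where "H = tree_edge V s p"
  obtain \<alpha> where bfs: "is_bfs_order V H s \<alpha>"
    and dp: "dfs_plus V H (ordering_tau V E s \<rho> (rev \<alpha>)) \<sigma>"
    using assms(7) unfolding ordering_output_def H_def by blast
  define \<beta> where "\<beta> = rev \<alpha>"
  define Q where "Q = ordering_partition V E \<beta>"
  define L where "L = concat (map (\<lambda>C. filter (\<lambda>x. x \<in> C) (rev \<rho>)) Q)"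
  define \<tau> where "\<tau> = ordering_tau V E s \<rho> \<beta>"
  have tau: "\<tau> = rev (s # filter (\<lambda>x. x \<noteq> s) L)"
    unfolding \<tau>_def ordering_tau_def L_def Q_def by simp
  have dp': "dfs_plus V H \<tau> \<sigma>" using dp unfolding \<tau>_def \<beta>_def .
  have voa: "vertex_order V \<alpha>" and a0: "\<alpha>!0 = s"
    using bfs unfolding is_bfs_order_def by auto
  have srcha: "\<forall>i. 0<i \<and> i<length \<alpha> \<longrightarrow> (\<exists>j<i. tree_edge V s p (\<alpha>!j) (\<alpha>!i))"
    using bfs unfolding is_bfs_order_def H_def by blast
  have vos: "vertex_order V \<sigma>" and s0: "\<sigma>!0 = s"
    using dp' tau unfolding dfs_plus_def by (auto simp: last_rev)
  have dps: "\<forall>i. 0 < i \<and> i < length \<sigma> \<longrightarrow>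
        (\<exists>j<i. H (\<sigma> ! j) (\<sigma> ! i) \<and>
           (\<forall>k. j < k \<and> k < i \<longrightarrow> (\<forall>u\<in>V. H (\<sigma> ! k) u \<longrightarrow> u \<in> set (take i \<sigma>))) \<and>
           (\<forall>u\<in>V. H (\<sigma> ! j) u \<and> u \<notin> set (take i \<sigma>) \<longrightarrow> u = \<sigma> ! i \<or> prec \<tau> u (\<sigma> ! i)))"
    using dp' unfolding dfs_plus_def by (elim conjE)
  have srchs: "\<forall>i. 0<i \<and> i<length \<sigma> \<longrightarrow> (\<exists>j<i. tree_edge V s p (\<sigma>!j) (\<sigma>!i))"
    using dps unfolding H_def by blast
  have ds: "distinct \<sigma>" "set \<sigma> = V" using vos unfolding vertex_order_def by auto
  have da: "distinct \<alpha>" "set \<alpha> = V" using voa unfolding vertex_order_def by auto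
  have dr: "distinct \<rho>" "set \<rho> = V" using assms(5) unfolding vertex_order_def by auto
  have vw: "v \<noteq> w" using assms(10) prec_irrefl[OF ds(1)] by blast
  have sib: "prec \<tau> w v"
  proof -
    obtain i j' where ij: "i < j'" "j' < length \<sigma>" "\<sigma>!i = v" "\<sigma>!j' = w"
      using assms(10) unfolding prec_def by blast
    have i0: "0 < i"
    proof (rule ccontr)
      assume "\<not> 0 < i" then have "i = 0" by simp
      then show False using ij s0 assms(8) by simp
    qed
    have il: "i < length \<sigma>" using ij by linarith
    obtain j where j: "j < i" "H (\<sigma>!j) (\<sigma>!i)"
      "\<forall>u\<in>V. H (\<sigma> ! j) u \<and> u \<notin> set (take i \<sigma>) \<longrightarrow> u = \<sigma> ! i \<or> prec \<tau> u (\<sigma> ! i)"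
      using dps[rule_format, of i] i0 il by blast
    have pj: "\<sigma>!j = p v"
    proof -
      consider "\<sigma>!j \<in> V - {s} \<and> \<sigma>!i = p (\<sigma>!j)" | "\<sigma>!i \<in> V - {s} \<and> \<sigma>!j = p (\<sigma>!i)"
        using j(2) unfolding H_def tree_edge_def by blast
      then show ?thesis
      proof cases
        case 1
        have jl: "j < length \<sigma>" using j il by linarith
        have "\<sigma>!j \<noteq> s" using 1 by blast
        then have "prec \<sigma> (p (\<sigma>!j)) (\<sigma>!j)" using search_parent[OF vos s0 srchs jl] by blast
        then have "prec \<sigma> (\<sigma>!i) (\<sigma>!j)" using 1 by simp
        moreover have "prec \<sigma> (\<sigma>!j) (\<sigma>!i)" unfolding prec_def using j il by blast
        ultimately show ?thesis using prec_asym[OF ds(1)] by blast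
      next
        case 2 then show ?thesis using ij by simp
      qed
    qed
    have "H (\<sigma>!j) w" unfolding H_def tree_edge_def using assms(9,11) pj by (intro disjI2) simp
    moreover have "w \<notin> set (take i \<sigma>)"
    proof
      assume "w \<in> set (take i \<sigma>)"
      then obtain k where k: "k < length (take i \<sigma>)" "take i \<sigma> ! k = w" by (auto simp: in_set_conv_nth)
      then have "k < i" "\<sigma>!k = w" by auto
      moreover have "k < length \<sigma>" using \<open>k < i\<close> il by linarith
      ultimately have "k = j'" using nth_eq_iff_index_eq[OF ds(1), of k j'] ij by simp
      then show False using \<open>k < i\<close> ij by simp
    qed
    moreover have "w \<in> V" using assms(9) by blast
    ultimately have "w = \<sigma>!i \<or> prec \<tau> w (\<sigma>!i)" using j(3) by blast
    then show ?thesis using ij vw by simp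
  qed
  define S where "S = (\<lambda>x. {y. E x y \<and> prec \<beta> y x})"
  have key: "\<forall>x. (v \<in> S x \<longrightarrow> w \<in> S x)"
  proof (intro allI impI)
    fix x assume "v \<in> S x"
    then have xv: "E x v" "prec \<alpha> x v" unfolding S_def \<beta>_def by (auto simp: prec_rev)
    have xnv: "x \<noteq> v" using xv Eirr by blast
    have "anc V s p x v \<or> anc V s p v x" using dfs_edge_anc[OF sg dfs pv xv(1)] .
    moreover have "\<not> anc V s p v x"
    proof
      assume "anc V s p v x"
      then have "v = x \<or> prec \<alpha> v x" using search_anc[OF voa a0 srcha] by blast
      then show False using xnv xv prec_asym[OF da(1)] by blast
    qed
    ultimately have axv: "anc V s p x v" by blast
    have axw: "anc V s p x w"
    proof -
      from axv xnv obtain y where "anc V s p x y" "v \<in> V - {s} \<and> y = p v"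
        unfolding anc_def by (blast elim: rtranclp.cases)
      then have "anc V s p x (p w)" using assms(11) by simp
      moreover have "anc V s p (p w) w" unfolding anc_def using assms(9) by (intro r_into_rtranclp) simp
      ultimately show ?thesis unfolding anc_def by (rule rtranclp_trans)
    qed
    have sxv: "prec \<sigma> x v" using search_anc[OF vos s0 srchs axv] xnv by blast
    have xnw: "x \<noteq> w" using sxv assms(10) prec_asym[OF ds(1)] by blast
    have axw': "prec \<alpha> x w" using search_anc[OF voa a0 srcha axw] xnw by blast
    have "E v x" using Esym xv(1) by blast
    then have "E w x" using assms(12) sxv by blast
    then have "E x w" using Esym by blast
    then show "w \<in> S x" unfolding S_def \<beta>_def using axw' by (simp add: prec_rev)
  qed
  have vV: "v \<in> V" and wV: "w \<in> V" using assms(8,9) by auto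
  have inv: "dl Q \<and> leQ Q w v"
    unfolding Q_def ordering_partition_def
    using fold_inv[of v S w "[V]" \<beta>, OF key] vV wV unfolding S_def by simp
  show ?thesis
  proof (rule ccontr)
    assume "\<not> prec \<rho> w v"
    then have "prec \<rho> v w" using prec_total[of v \<rho> w] vV wV dr vw by blast
    then have "prec (rev \<rho>) w v" by (simp add: prec_rev)
    then have "prec L w v" unfolding L_def using concat_prec[of Q w v "rev \<rho>"] inv by simp
    then have "prec (filter (\<lambda>x. x \<noteq> s) L) w v" using assms(8,9) by (intro prec_filter) auto
    then have "prec (s # filter (\<lambda>x. x \<noteq> s) L) w v" by (rule prec_cons)
    then have "prec \<tau> v w" unfolding tau using prec_rev[of "s # filter (\<lambda>x. x \<noteq> s) L" v w] by blast
    moreover have "distinct \<tau>"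
    proof -
      have "distinct L" unfolding L_def using concat_distinct[of Q "rev \<rho>"] inv dr(1) by simp
      then show ?thesis unfolding tau by simp
    qed
    ultimately show False using sib prec_asym[of \<tau> v w] by simp
  qed
qed

end
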